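(* Let $s>1/2$. For $\tau\in\mathbb R$ let $\mathcal H_1(\tau)e_n=e^{-in^3\tau}e_n$, $n\in\mathbb Z$, and for $w\in H^s$ set $$\widetilde H(\tau,w):=\mathcal H_1(-\tau)\big(\mathcal H_1(\tau)w\cdot\partial_x\mathcal H_1(\tau)w\big).$$ Then $\widetilde H(\tau,\cdot)$ is well defined and smooth from $H^s$ to $H^{s-1}$ with $\|\widetilde H(\tau,w)\|_{H^{s-1}}\le C_s\|w\|_{H^s}^2$, $C_s$ independent of $\tau$. Moreover, $\widetilde H$ is $2\pi$-periodic in $\tau$ and its time average is $$K(w):=\frac1{2\pi}\int_0^{2\pi}\widetilde H(\tau,w)\,d\tau=w_0\,\partial_x w+ie_0\sum_{n\in\mathbb Z}nw_nw_{-n}=w_0\sum_{n\in\mathbb Z}inw_ne_n+\Big(\sum_{n\in\mathbb Z}inw_nw_{-n}\Big)e_0,$$ where $w_0=\frac1{2\pi}\int_{-\pi}^{\pi}w(x)\,dx$.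
   Context: $e_n(x)=e^{inx}$; $w=\sum_n w_ne_n$; $H^s$ is the space of complex-valued $2\pi$-periodic functions with $\|w\|_{H^s}^2=\sum_n(|n|^2+1)^s|w_n|^2<\infty$. *)

theory Defs
  imports "HOL-Analysis.Analysis"
begin

text \<open>A 2pi-periodic function w = sum_n w_n e_n is represented by its Fourier
coefficient sequence w :: int => complex.\<close>

definition in_Hs :: "real \<Rightarrow> (int \<Rightarrow> complex) \<Rightarrow> bool" where
  "in_Hs s w \<longleftrightarrow>
     (\<lambda>n. ((real_of_int n)\<^sup>2 + 1) powr s * (cmod (w n))\<^sup>2) summable_on UNIV"

definition Hs_norm :: "real \<Rightarrow> (int \<Rightarrow> complex) \<Rightarrow> real" where
  "Hs_norm s w = sqrt (\<Sum>\<^sub>\<infinity>n. ((real_of_int n)\<^sup>2 + 1) powr s * (cmod (w n))\<^sup>2)"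

definition H1 :: "real \<Rightarrow> (int \<Rightarrow> complex) \<Rightarrow> (int \<Rightarrow> complex)" where
  "H1 \<tau> w = (\<lambda>n. exp (- \<i> * of_int (n ^ 3) * of_real \<tau>) * w n)"

definition Dx :: "(int \<Rightarrow> complex) \<Rightarrow> (int \<Rightarrow> complex)" where
  "Dx w = (\<lambda>n. \<i> * of_int n * w n)"

text \<open>product of two functions, on Fourier coefficients (convolution)\<close>
definition fprod :: "(int \<Rightarrow> complex) \<Rightarrow> (int \<Rightarrow> complex) \<Rightarrow> (int \<Rightarrow> complex)" where
  "fprod f g = (\<lambda>n. \<Sum>\<^sub>\<infinity>k. f k * g (n - k))"

definition Htilde :: "real \<Rightarrow> (int \<Rightarrow> complex) \<Rightarrow> (int \<Rightarrow> complex)" where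
  "Htilde \<tau> w = H1 (- \<tau>) (fprod (H1 \<tau> w) (Dx (H1 \<tau> w)))"

definition Kavg :: "(int \<Rightarrow> complex) \<Rightarrow> (int \<Rightarrow> complex)" where
  "Kavg w = (\<lambda>n. w 0 * (\<i> * of_int n * w n)
     + (if n = 0 then (\<Sum>\<^sub>\<infinity>m. \<i> * of_int m * w m * w (- m)) else 0))"

definition multilin_bdd ::
  "real \<Rightarrow> real \<Rightarrow> nat \<Rightarrow> ((int \<Rightarrow> complex) list \<Rightarrow> (int \<Rightarrow> complex)) \<Rightarrow> bool" where
  "multilin_bdd s t k M \<longleftrightarrow>
     (\<forall>hs. length hs = k \<and> (\<forall>h\<in>set hs. in_Hs s h) \<longrightarrow> in_Hs t (M hs)) \<and>
     (\<forall>i<k. \<forall>hs a b. \<forall>c::real. length hs = k \<and> (\<forall>h\<in>set hs. in_Hs s h) \<and> in_Hs s a \<and> in_Hs s b \<longrightarrow>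
         M (hs[i := (\<lambda>n. of_real c * a n + b n)])
           = (\<lambda>n. of_real c * M (hs[i := a]) n + M (hs[i := b]) n)) \<and>
     (\<exists>C. \<forall>hs. length hs = k \<and> (\<forall>h\<in>set hs. in_Hs s h) \<longrightarrow>
         Hs_norm t (M hs) \<le> C * (\<Prod>h\<leftarrow>hs. Hs_norm s h))"

text \<open>F : H^s -> H^t is C^infinity (Frechet): there is a family D k w of bounded
k-linear maps with D 0 w [] = F w and D (k+1) w the Frechet derivative of w |-> D k w
(in the operator norm of k-linear maps).\<close>
definition smooth_Hs :: "real \<Rightarrow> real \<Rightarrow> ((int \<Rightarrow> complex) \<Rightarrow> (int \<Rightarrow> complex)) \<Rightarrow> bool" where
  "smooth_Hs s t F \<longleftrightarrow>
    (\<exists>D :: nat \<Rightarrow> (int \<Rightarrow> complex) \<Rightarrow> (int \<Rightarrow> complex) list \<Rightarrow> (int \<Rightarrow> complex).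
      (\<forall>w. in_Hs s w \<longrightarrow> D 0 w [] = F w) \<and>
      (\<forall>k w. in_Hs s w \<longrightarrow> multilin_bdd s t k (D k w)) \<and>
      (\<forall>k w. in_Hs s w \<longrightarrow>
         (\<forall>\<epsilon>>0. \<exists>\<delta>>0. \<forall>h. in_Hs s h \<and> Hs_norm s h < \<delta> \<longrightarrow>
            (\<forall>hs. length hs = k \<and> (\<forall>g\<in>set hs. in_Hs s g \<and> Hs_norm s g \<le> 1) \<longrightarrow>
               Hs_norm t (\<lambda>n. D k (\<lambda>m. w m + h m) hs n - D k w hs n - D (Suc k) w (h # hs) n)
                 \<le> \<epsilon> * Hs_norm s h))))"

end

theory Submission
  imports Defs
begin


lemma cs_infsum:
  fixes f g :: "'a \<Rightarrow> real"
  assumes f0: "\<And>k. f k \<ge> 0" and g0: "\<And>k. g k \<ge> 0"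
    and s1: "(\<lambda>k. (f k)^2 * g k) summable_on UNIV" and s2: "g summable_on UNIV"
  shows "(\<lambda>k. f k * g k) summable_on UNIV \<and>
         (\<Sum>\<^sub>\<infinity>k. f k * g k)^2 \<le> (\<Sum>\<^sub>\<infinity>k. (f k)^2 * g k) * (\<Sum>\<^sub>\<infinity>k. g k)"
proof -
  have sm: "(\<lambda>k. f k * g k) summable_on UNIV"
  proof (rule summable_on_comparison_test[OF summable_on_add[OF s1 s2]])
    fix k
    have "0 \<le> (f k - 1/2)^2" by simp
    hence "f k \<le> (f k)^2 + 1" by (simp add: power2_eq_square algebra_simps)
    hence "f k * g k \<le> ((f k)^2 + 1) * g k" using g0 mult_right_mono by blast
    thus "f k * g k \<le> (f k)^2 * g k + g k" by (simp add: algebra_simps)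
    show "0 \<le> f k * g k" using f0 g0 by simp
  qed
  define A where "A = (\<Sum>\<^sub>\<infinity>k. (f k)^2 * g k)"
  define B where "B = (\<Sum>\<^sub>\<infinity>k. g k)"
  define S where "S = (\<Sum>\<^sub>\<infinity>k. f k * g k)"
  have A0: "A \<ge> 0" unfolding A_def by (rule infsum_nonneg) (use f0 g0 in auto)
  have B0: "B \<ge> 0" unfolding B_def by (rule infsum_nonneg) (use f0 g0 in auto)
  have S0: "S \<ge> 0" unfolding S_def by (rule infsum_nonneg) (use f0 g0 in auto)
  have key: "2*t*S \<le> t^2*A + B" if "t > 0" for t
  proof -
    have "2*t*S = (\<Sum>\<^sub>\<infinity>k. (2*t) * (f k * g k))" unfolding S_def by (simp add: infsum_cmult_right')
    also have "\<dots> \<le> (\<Sum>\<^sub>\<infinity>k. t^2 * ((f k)^2 * g k) + g k)"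
    proof (rule infsum_mono)
      show "(\<lambda>k. (2*t) * (f k * g k)) summable_on UNIV" by (rule summable_on_cmult_right[OF sm])
      show "(\<lambda>k. t^2 * ((f k)^2 * g k) + g k) summable_on UNIV"
        by (rule summable_on_add[OF summable_on_cmult_right[OF s1] s2])
      fix k
      have "0 \<le> (t * f k - 1)^2 * g k" using g0 by simp
      thus "(2*t) * (f k * g k) \<le> t^2 * ((f k)^2 * g k) + g k" by (simp add: power2_eq_square algebra_simps)
    qed
    also have "\<dots> = t^2*A + B" unfolding A_def B_def
      by (subst infsum_add[OF summable_on_cmult_right[OF s1] s2]) (simp add: infsum_cmult_right')
    finally show ?thesis .
  qed
  have "S^2 \<le> A * B"
  proof (cases "S = 0")
    case True thus ?thesis using A0 B0 by simp
  next
    case False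
    hence Sp: "S > 0" using S0 by simp
    show ?thesis
    proof (cases "A = 0")
      case True
      have "2*((B+1)/S)*S \<le> ((B+1)/S)^2*A + B" using key[of "(B+1)/S"] Sp B0 by simp
      thus ?thesis using True Sp B0 by simp
    next
      case False
      hence Ap: "A > 0" using A0 by simp
      have "2*(S/A)*S \<le> (S/A)^2*A + B" using key[of "S/A"] Sp Ap by simp
      hence "2*S^2/A \<le> S^2/A + B" using Ap by (simp add: power2_eq_square field_simps)
      hence "S^2/A \<le> B" by simp
      thus ?thesis using Ap by (simp add: field_simps)
    qed
  qed
  thus ?thesis using sm unfolding A_def B_def S_def by simp
qed



lemma bij_refl: "bij_betw (\<lambda>k::int. n - k) UNIV UNIV"
  by (rule bij_betwI[where g="\<lambda>k. n - k"]) auto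

lemma bij_neg: "bij_betw (\<lambda>k::int. - k) UNIV UNIV"
  by (rule bij_betwI[where g="\<lambda>k. - k"]) auto

lemma refl_summable: "(\<lambda>k::int. f (n - k)) summable_on UNIV \<longleftrightarrow> f summable_on UNIV"
  using summable_on_reindex_bij_betw[OF bij_refl[of n], of f] by simp

lemma refl_infsum: "(\<Sum>\<^sub>\<infinity>k::int. f (n - k)) = infsum f UNIV"
  using infsum_reindex_bij_betw[OF bij_refl[of n], of f] by simp

lemma infsum_finite_sum:
  fixes f :: "'b \<Rightarrow> 'a \<Rightarrow> real"
  assumes "finite N" "\<And>n. n \<in> N \<Longrightarrow> f n summable_on UNIV"
  shows "(\<lambda>k. \<Sum>n\<in>N. f n k) summable_on UNIV \<and> (\<Sum>\<^sub>\<infinity>k. \<Sum>n\<in>N. f n k) = (\<Sum>n\<in>N. \<Sum>\<^sub>\<infinity>k. f n k)"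
  using assms
proof (induction N rule: finite_induct)
  case empty thus ?case by simp
next
  case (insert x F)
  hence IH: "(\<lambda>k. \<Sum>n\<in>F. f n k) summable_on UNIV" "(\<Sum>\<^sub>\<infinity>k. \<Sum>n\<in>F. f n k) = (\<Sum>n\<in>F. \<Sum>\<^sub>\<infinity>k. f n k)"
    by auto
  have fx: "f x summable_on UNIV" using insert by auto
  show ?case using insert(1,2) IH fx
    by (simp add: infsum_add summable_on_add)
qed

lemma young:
  fixes F G :: "int \<Rightarrow> real"
  assumes F0: "\<And>k. F k \<ge> 0" and G0: "\<And>k. G k \<ge> 0"
   and sF: "(\<lambda>k. (F k)^2) summable_on UNIV" and sG: "G summable_on UNIV"
  shows "(\<lambda>k. F k * G (n-k)) summable_on UNIV"
    and "(\<lambda>n. (\<Sum>\<^sub>\<infinity>k. F k * G (n-k))^2) summable_on UNIV"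
    and "(\<Sum>\<^sub>\<infinity>n. (\<Sum>\<^sub>\<infinity>k. F k * G (n-k))^2) \<le> (\<Sum>\<^sub>\<infinity>k. (F k)^2) * (\<Sum>\<^sub>\<infinity>k. G k)^2"
proof -
  define B where "B = (\<Sum>\<^sub>\<infinity>k. G k)"
  have Gn: "(\<lambda>k. G (m-k)) summable_on UNIV" for m using sG refl_summable by blast
  have GnB: "(\<Sum>\<^sub>\<infinity>k. G (m-k)) = B" for m unfolding B_def by (rule refl_infsum)
  have Gle: "G k \<le> B" for k
    using finite_sum_le_infsum[OF sG, of "{k}"] G0 unfolding B_def by auto
  have B0: "B \<ge> 0" using Gle[of 0] G0[of 0] by linarith
  have s1: "(\<lambda>k. (F k)^2 * G (m-k)) summable_on UNIV" for m
  proof (rule summable_on_comparison_test[OF summable_on_cmult_left[OF sF, of B]])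
    fix k show "(F k)^2 * G (m-k) \<le> (F k)^2 * B" using Gle by (simp add: mult_left_mono)
    show "0 \<le> (F k)^2 * G (m-k)" using G0 by simp
  qed
  have cs: "(\<lambda>k. F k * G (m-k)) summable_on UNIV \<and>
      (\<Sum>\<^sub>\<infinity>k. F k * G (m-k))^2 \<le> (\<Sum>\<^sub>\<infinity>k. (F k)^2 * G (m-k)) * B" for m
    using cs_infsum[of F "\<lambda>k. G (m-k)", OF F0 G0 s1 Gn] GnB by simp
  thus "(\<lambda>k. F k * G (n-k)) summable_on UNIV" by blast
  have fin: "(\<Sum>n\<in>N. (\<Sum>\<^sub>\<infinity>k. F k * G (n-k))^2) \<le> (\<Sum>\<^sub>\<infinity>k. (F k)^2) * B^2" if "finite N" for N
  proof -
    have "(\<Sum>n\<in>N. (\<Sum>\<^sub>\<infinity>k. F k * G (n-k))^2) \<le> (\<Sum>n\<in>N. (\<Sum>\<^sub>\<infinity>k. (F k)^2 * G (n-k)) * B)"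
      by (rule sum_mono) (use cs in blast)
    also have "\<dots> = B * (\<Sum>\<^sub>\<infinity>k. \<Sum>n\<in>N. (F k)^2 * G (n-k))"
      using infsum_finite_sum[of N "\<lambda>n k. (F k)^2 * G (n-k)"] that s1
      by (simp add: sum_distrib_left sum_distrib_right mult.commute)
    also have "(\<Sum>\<^sub>\<infinity>k. \<Sum>n\<in>N. (F k)^2 * G (n-k)) \<le> (\<Sum>\<^sub>\<infinity>k. (F k)^2 * B)"
    proof (rule infsum_mono)
      show "(\<lambda>k. \<Sum>n\<in>N. (F k)^2 * G (n-k)) summable_on UNIV"
        using infsum_finite_sum[of N "\<lambda>n k. (F k)^2 * G (n-k)"] that s1 by blast
      show "(\<lambda>k. (F k)^2 * B) summable_on UNIV" by (rule summable_on_cmult_left[OF sF])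
      fix k
      have "(\<Sum>n\<in>N. G (n-k)) = sum G ((\<lambda>n. n-k) ` N)"
        by (subst sum.reindex) (auto simp: inj_on_def)
      also have "\<dots> \<le> B" unfolding B_def
        by (rule finite_sum_le_infsum[OF sG]) (use that G0 in auto)
      finally have "(\<Sum>n\<in>N. G (n-k)) \<le> B" .
      thus "(\<Sum>n\<in>N. (F k)^2 * G (n-k)) \<le> (F k)^2 * B"
        by (simp add: sum_distrib_left[symmetric] mult_left_mono)
    qed
    hence "B * (\<Sum>\<^sub>\<infinity>k. \<Sum>n\<in>N. (F k)^2 * G (n-k)) \<le> B * (\<Sum>\<^sub>\<infinity>k. (F k)^2 * B)"
      using B0 by (simp add: mult_left_mono)
    also have "\<dots> = (\<Sum>\<^sub>\<infinity>k. (F k)^2) * B^2"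
      by (simp add: infsum_cmult_left' power2_eq_square)
    finally show ?thesis .
  qed
  show sm: "(\<lambda>n. (\<Sum>\<^sub>\<infinity>k. F k * G (n-k))^2) summable_on UNIV"
    by (rule nonneg_bdd_above_summable_on) (use fin in \<open>auto simp: bdd_above_def\<close>)
  show "(\<Sum>\<^sub>\<infinity>n. (\<Sum>\<^sub>\<infinity>k. F k * G (n-k))^2) \<le> (\<Sum>\<^sub>\<infinity>k. (F k)^2) * (\<Sum>\<^sub>\<infinity>k. G k)^2"
    using infsum_le_finite_sums[OF sm] fin unfolding B_def by blast
qed



definition wt :: "real \<Rightarrow> int \<Rightarrow> real" where
  "wt s n = ((real_of_int n)\<^sup>2 + 1) powr s"

lemma base_pos[simp]: "(real_of_int n)\<^sup>2 + 1 > 0"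
proof -
  have "0 \<le> (real_of_int n)\<^sup>2" by simp
  thus ?thesis by linarith
qed

lemma base_ne0[simp]: "(real_of_int n)\<^sup>2 + 1 \<noteq> 0"
  using base_pos[of n] by linarith

lemma wt_pos[simp]: "wt s n > 0"
  unfolding wt_def by simp

lemma wt_nonneg[simp]: "wt s n \<ge> 0"
  using wt_pos[of s n] by linarith

lemma wt_add: "wt a n * wt b n = wt (a + b) n"
  unfolding wt_def by (simp add: powr_add)

lemma wt_zero[simp]: "wt 0 n = 1"
  unfolding wt_def by simp

lemma wt_mono: "a \<le> b \<Longrightarrow> wt a n \<le> wt b n"
  unfolding wt_def by (rule powr_mono) auto

lemma wt_ge1: "a \<ge> 0 \<Longrightarrow> wt a n \<ge> 1"
  using wt_mono[of 0 a n] by simp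

lemma in_Hs_wt: "in_Hs s w \<longleftrightarrow> (\<lambda>n. wt s n * (cmod (w n))\<^sup>2) summable_on UNIV"
  unfolding in_Hs_def wt_def ..

lemma Hs_norm_wt: "Hs_norm s w = sqrt (\<Sum>\<^sub>\<infinity>n. wt s n * (cmod (w n))\<^sup>2)"
  unfolding Hs_norm_def wt_def ..

lemma Hs_norm_nonneg[simp]: "Hs_norm s w \<ge> 0"
  unfolding Hs_norm_wt by (simp add: infsum_nonneg)

lemma Hs_norm_sq: "(Hs_norm s w)^2 = (\<Sum>\<^sub>\<infinity>n. wt s n * (cmod (w n))\<^sup>2)"
proof -
  have "(\<Sum>\<^sub>\<infinity>n. wt s n * (cmod (w n))\<^sup>2) \<ge> 0" by (rule infsum_nonneg) simp
  thus ?thesis unfolding Hs_norm_wt by simp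
qed

lemma pseries_nat:
  assumes "s > 1/2"
  shows "(\<lambda>n::nat. ((real n)\<^sup>2 + 1) powr (-s)) summable_on UNIV"
proof -
  have "summable (\<lambda>n::nat. (real n) powr (-(s + s)))"
    using assms by (subst summable_real_powr_iff) simp
  hence "summable (\<lambda>n::nat. ((real n)\<^sup>2 + 1) powr (-s))"
  proof (rule summable_comparison_test'[where N=1])
    fix n :: nat assume n: "n \<ge> 1"
    have "((real n)^2 + 1) powr (-s) \<le> ((real n)^2) powr (-s)"
      using assms n by (intro powr_mono2') auto
    also have "((real n)^2) powr (-s) = ((real n) powr 2) powr (-s)" by simp
    also have "\<dots> = (real n) powr (2 * (-s))" by (rule powr_powr)
    also have "\<dots> = (real n) powr (-(s + s))" by simp
    finally show "norm (((real n)\<^sup>2 + 1) powr (-s)) \<le> (real n) powr (-(s + s))" by simp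
  qed
  thus ?thesis by (subst summable_on_UNIV_nonneg_real_iff) auto
qed

lemma pseries:
  assumes "s > 1/2"
  shows "(\<lambda>k::int. wt (-s) k) summable_on UNIV"
proof -
  have U: "(UNIV::int set) = range int \<union> range (\<lambda>n. - int n)"
    by (auto simp: image_def) (metis int_cases2)
  have 1: "(\<lambda>k::int. wt (-s) k) summable_on range int"
    by (subst summable_on_reindex) (use pseries_nat[OF assms] in \<open>auto simp: o_def wt_def\<close>)
  have 2: "(\<lambda>k::int. wt (-s) k) summable_on range (\<lambda>n. - int n)"
    by (subst summable_on_reindex) (use pseries_nat[OF assms] in \<open>auto simp: o_def wt_def inj_on_def\<close>)
  show ?thesis using summable_on_union[OF 1 2] U by simp
qed

lemma in_Hs_mono:
  assumes "t \<le> s" "in_Hs s w"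
  shows "in_Hs t w"
  using assms unfolding in_Hs_wt
  by (elim summable_on_comparison_test) (auto intro: mult_right_mono wt_mono)

lemma in_Hs_lin:
  assumes "in_Hs s a" "in_Hs s b"
  shows "in_Hs s (\<lambda>n. c * a n + b n)"
  unfolding in_Hs_wt
proof (rule summable_on_comparison_test)
  show "(\<lambda>n. 2 * (cmod c)^2 * (wt s n * (cmod (a n))\<^sup>2) + 2 * (wt s n * (cmod (b n))\<^sup>2)) summable_on UNIV"
    using assms unfolding in_Hs_wt by (intro summable_on_add summable_on_cmult_right)
  fix n
  have "cmod (c * a n + b n) \<le> cmod c * cmod (a n) + cmod (b n)"
    by (metis norm_mult norm_triangle_ineq)
  hence "(cmod (c * a n + b n))^2 \<le> (cmod c * cmod (a n) + cmod (b n))^2"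
    by (simp add: power_mono)
  also have "\<dots> \<le> 2 * (cmod c)^2 * (cmod (a n))^2 + 2 * (cmod (b n))^2"
  proof -
    have "0 \<le> (cmod c * cmod (a n) - cmod (b n))^2" by simp
    thus ?thesis by (simp add: power2_eq_square algebra_simps)
  qed
  finally have "wt s n * (cmod (c * a n + b n))^2 \<le> wt s n * (2 * (cmod c)^2 * (cmod (a n))^2 + 2 * (cmod (b n))^2)"
    by (simp add: mult_left_mono)
  thus "wt s n * (cmod (c * a n + b n))\<^sup>2 \<le> 2 * (cmod c)^2 * (wt s n * (cmod (a n))\<^sup>2) + 2 * (wt s n * (cmod (b n))\<^sup>2)"
    by (simp add: algebra_simps)
  show "0 \<le> wt s n * (cmod (c * a n + b n))\<^sup>2" by simp
qed

lemma Hs_compare: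
  assumes "in_Hs s v" "K \<ge> 0" "\<And>n. wt t n * (cmod (u n))^2 \<le> K * (wt s n * (cmod (v n))^2)"
  shows "in_Hs t u" "Hs_norm t u \<le> sqrt K * Hs_norm s v"
proof -
  have sv: "(\<lambda>n. wt s n * (cmod (v n))^2) summable_on UNIV" using assms(1) in_Hs_wt by blast
  show su: "in_Hs t u" unfolding in_Hs_wt
    by (rule summable_on_comparison_test[OF summable_on_cmult_right[OF sv, of K]]) (use assms in auto)
  have "(\<Sum>\<^sub>\<infinity>n. wt t n * (cmod (u n))^2) \<le> (\<Sum>\<^sub>\<infinity>n. K * (wt s n * (cmod (v n))^2))"
    by (rule infsum_mono) (use su sv assms in \<open>auto simp: in_Hs_wt intro: summable_on_cmult_right\<close>)
  also have "\<dots> = K * (\<Sum>\<^sub>\<infinity>n. wt s n * (cmod (v n))^2)" by (simp add: infsum_cmult_right')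
  finally have "sqrt (\<Sum>\<^sub>\<infinity>n. wt t n * (cmod (u n))^2) \<le> sqrt (K * (\<Sum>\<^sub>\<infinity>n. wt s n * (cmod (v n))^2))"
    by (rule real_sqrt_le_mono)
  thus "Hs_norm t u \<le> sqrt K * Hs_norm s v" unfolding Hs_norm_wt by (simp add: real_sqrt_mult)
qed

lemma l1_bound:
  assumes "s > 1/2" "in_Hs s w"
  shows "(\<lambda>k. cmod (w k)) summable_on UNIV"
    and "(\<Sum>\<^sub>\<infinity>k. cmod (w k))^2 \<le> (\<Sum>\<^sub>\<infinity>k. wt (-s) k) * (Hs_norm s w)^2"
proof -
  have e1: "wt s k * cmod (w k) * wt (-s) k = cmod (w k)" for k
    using wt_add[of s k "-s"] by (simp add: algebra_simps)
  have e2: "(wt s k * cmod (w k))^2 * wt (-s) k = wt s k * (cmod (w k))^2" for k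
    using wt_add[of s k "-s"] by (simp add: power2_eq_square algebra_simps)
  have c: "(\<lambda>k. wt s k * cmod (w k) * wt (-s) k) summable_on UNIV \<and>
     (\<Sum>\<^sub>\<infinity>k. wt s k * cmod (w k) * wt (-s) k)^2 \<le> (\<Sum>\<^sub>\<infinity>k. (wt s k * cmod (w k))^2 * wt (-s) k) * (\<Sum>\<^sub>\<infinity>k. wt (-s) k)"
    by (rule cs_infsum) (use assms pseries in \<open>auto simp: e2 in_Hs_wt\<close>)
  show "(\<lambda>k. cmod (w k)) summable_on UNIV" using c by (simp add: e1)
  show "(\<Sum>\<^sub>\<infinity>k. cmod (w k))^2 \<le> (\<Sum>\<^sub>\<infinity>k. wt (-s) k) * (Hs_norm s w)^2"
  proof -
    have "(\<Sum>\<^sub>\<infinity>k. cmod (w k))^2 \<le> (\<Sum>\<^sub>\<infinity>k. wt s k * (cmod (w k))^2) * (\<Sum>\<^sub>\<infinity>k. wt (-s) k)"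
      using c by (simp only: e1 e2)
    thus ?thesis by (simp add: Hs_norm_sq mult.commute)
  qed
qed



lemma l2_conv:
  fixes a b :: "int \<Rightarrow> real"
  assumes "\<And>k. a k \<ge> 0" "\<And>k. b k \<ge> 0"
    "(\<lambda>k. (a k)^2) summable_on UNIV" "(\<lambda>k. (b k)^2) summable_on UNIV"
  shows "(\<lambda>k. a k * b (n - k)) summable_on UNIV"
proof (rule summable_on_comparison_test)
  have "(\<lambda>k. (b (n - k))^2) summable_on UNIV"
    using assms(4) refl_summable[of "\<lambda>k. (b k)^2" n] by simp
  thus "(\<lambda>k. (a k)^2 + (b (n - k))^2) summable_on UNIV"
    using assms(3) by (rule summable_on_add[rotated])
  fix k
  have "0 \<le> (a k - b (n - k))^2" by simp
  hence "2 * (a k * b (n - k)) \<le> (a k)^2 + (b (n - k))^2" by (simp add: power2_eq_square algebra_simps)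
  moreover have "0 \<le> a k * b (n - k)" using assms by simp
  ultimately show "a k * b (n - k) \<le> (a k)^2 + (b (n - k))^2" by linarith
  show "0 \<le> a k * b (n - k)" using assms by simp
qed

lemma four_powr: "(4::real) powr (s/2) = 2 powr s"
proof -
  have "(4::real) = 2 powr 2" by simp
  hence "(4::real) powr (s/2) = 2 powr (2 * (s/2))" by (simp add: powr_powr)
  thus ?thesis by simp
qed

lemma wt_tri:
  assumes "s \<ge> 0"
  shows "wt (s/2) n \<le> 2 powr s * (wt (s/2) k + wt (s/2) (n - k))"
proof -
  define x where "x = (real_of_int k)^2 + 1"
  define y where "y = (real_of_int (n - k))^2 + 1"
  define z where "z = (real_of_int n)^2 + 1"
  have xp: "x > 0" unfolding x_def by (rule base_pos)
  have yp: "y > 0" unfolding y_def by (rule base_pos)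
  have zp: "z > 0" unfolding z_def by (rule base_pos)
  have "z \<le> 2 * x + 2 * y"
  proof -
    have "0 \<le> (real_of_int k - real_of_int (n - k))^2" by simp
    thus ?thesis unfolding x_def y_def z_def by (simp add: power2_eq_square algebra_simps)
  qed
  hence z4: "z \<le> 4 * max x y" by linarith
  have "z powr (s/2) \<le> (4 * max x y) powr (s/2)"
    using z4 zp assms by (intro powr_mono2) auto
  also have "\<dots> = 2 powr s * (max x y) powr (s/2)"
    using xp yp by (simp add: powr_mult four_powr)
  also have "(max x y) powr (s/2) \<le> x powr (s/2) + y powr (s/2)"
  proof -
    have "x powr (s/2) \<ge> 0" "y powr (s/2) \<ge> 0" by simp_all
    thus ?thesis by (cases "x \<le> y") (simp_all add: max_def)
  qed
  finally have "z powr (s/2) \<le> 2 powr s * (x powr (s/2) + y powr (s/2))" by simp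
  thus ?thesis unfolding wt_def x_def y_def z_def by simp
qed

lemma arith_aux: "(S::real) \<ge> 0 \<Longrightarrow> 2 * a^2 * (2 * (S * x^2 * y^2)) = (2 * a * sqrt S * x * y)^2"
  by (simp add: power_mult_distrib)

definition algC :: "real \<Rightarrow> real" where
  "algC s = 2 * 2 powr s * sqrt (\<Sum>\<^sub>\<infinity>k. wt (-s) k)"

lemma algC_nonneg: "algC s \<ge> 0"
  unfolding algC_def by (simp add: infsum_nonneg)

lemma alg:
  assumes s: "s > 1/2" and u: "in_Hs s u" and v: "in_Hs s v"
  shows "(\<lambda>k. norm (u k * v (n - k))) summable_on UNIV"
    and "in_Hs s (fprod u v)"
    and "Hs_norm s (fprod u v) \<le> algC s * Hs_norm s u * Hs_norm s v"
proof -
  define U where "U k = cmod (u k)" for k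
  define V where "V k = cmod (v k)" for k
  define p where "p k = wt (s/2) k" for k
  define S where "S = (\<Sum>\<^sub>\<infinity>k. wt (-s) k)"
  define Nu where "Nu = (Hs_norm s u)^2"
  define Nv where "Nv = (Hs_norm s v)^2"
  have p2: "(p k)^2 = wt s k" for k unfolding p_def using wt_add[of "s/2" k "s/2"] by (simp add: power2_eq_square)
  have p1: "p k \<ge> 1" for k unfolding p_def using s by (intro wt_ge1) simp
  have U0: "U k \<ge> 0" and V0: "V k \<ge> 0" for k unfolding U_def V_def by simp_all
  have S0: "S \<ge> 0" unfolding S_def by (simp add: infsum_nonneg)
  define F1 where "F1 k = p k * U k" for k
  define F2 where "F2 k = p k * V k" for k
  have F10: "F1 k \<ge> 0" and F20: "F2 k \<ge> 0" for k unfolding F1_def F2_def using p1 U0 V0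
    by (simp_all add: order_trans[OF zero_le_one])
  have F1sq: "(F1 k)^2 = wt s k * (cmod (u k))^2" for k unfolding F1_def U_def by (simp add: power_mult_distrib p2)
  have F2sq: "(F2 k)^2 = wt s k * (cmod (v k))^2" for k unfolding F2_def V_def by (simp add: power_mult_distrib p2)
  have sF1: "(\<lambda>k. (F1 k)^2) summable_on UNIV" using u by (simp add: F1sq in_Hs_wt)
  have sF2: "(\<lambda>k. (F2 k)^2) summable_on UNIV" using v by (simp add: F2sq in_Hs_wt)
  have iF1: "(\<Sum>\<^sub>\<infinity>k. (F1 k)^2) = Nu" unfolding Nu_def Hs_norm_sq by (simp add: F1sq)
  have iF2: "(\<Sum>\<^sub>\<infinity>k. (F2 k)^2) = Nv" unfolding Nv_def Hs_norm_sq by (simp add: F2sq)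
  have sU: "U summable_on UNIV" and iU: "(\<Sum>\<^sub>\<infinity>k. U k)^2 \<le> S * Nu"
    using l1_bound[OF s u] unfolding U_def S_def Nu_def by auto
  have sV: "V summable_on UNIV" and iV: "(\<Sum>\<^sub>\<infinity>k. V k)^2 \<le> S * Nv"
    using l1_bound[OF s v] unfolding V_def S_def Nv_def by auto
  note Y1 = young[OF F10 V0 sF1 sV]
  note Y2 = young[OF F20 U0 sF2 sU]
  define X where "X n = (\<Sum>\<^sub>\<infinity>k. F1 k * V (n - k))" for n
  define Y where "Y n = (\<Sum>\<^sub>\<infinity>k. F2 k * U (n - k))" for n
  have Nu0: "Nu \<ge> 0" and Nv0: "Nv \<ge> 0" unfolding Nu_def Nv_def by simp_all
  have sX: "(\<lambda>n. (X n)^2) summable_on UNIV" using Y1(2) unfolding X_def .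
  have sY: "(\<lambda>n. (Y n)^2) summable_on UNIV" using Y2(2) unfolding Y_def .
  have iX: "(\<Sum>\<^sub>\<infinity>n. (X n)^2) \<le> S * Nu * Nv"
  proof -
    have "(\<Sum>\<^sub>\<infinity>n. (X n)^2) \<le> Nu * (\<Sum>\<^sub>\<infinity>k. V k)^2" using Y1(3) iF1 unfolding X_def by simp
    also have "\<dots> \<le> Nu * (S * Nv)" using iV Nu0 by (rule mult_left_mono)
    finally show ?thesis by (simp add: algebra_simps)
  qed
  have iY: "(\<Sum>\<^sub>\<infinity>n. (Y n)^2) \<le> S * Nu * Nv"
  proof -
    have "(\<Sum>\<^sub>\<infinity>n. (Y n)^2) \<le> Nv * (\<Sum>\<^sub>\<infinity>k. U k)^2" using Y2(3) iF2 unfolding Y_def by simp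
    also have "\<dots> \<le> Nv * (S * Nu)" using iU Nv0 by (rule mult_left_mono)
    finally show ?thesis by (simp add: algebra_simps)
  qed
  have absm: "(\<lambda>k. U k * V (m - k)) summable_on UNIV" for m
  proof (rule summable_on_comparison_test[OF Y1(1)[of m]])
    fix k show "U k * V (m - k) \<le> F1 k * V (m - k)" unfolding F1_def
      using p1[of k] U0[of k] V0[of "m-k"] by (simp add: mult_right_mono mult_le_cancel_right1)
    show "0 \<le> U k * V (m - k)" using U0 V0 by simp
  qed
  show "(\<lambda>k. norm (u k * v (n - k))) summable_on UNIV"
    using absm[of n] unfolding U_def V_def by (simp add: norm_mult)
  have sY': "(\<lambda>k. U k * F2 (m - k)) summable_on UNIV" for m
  proof -
    have "(\<lambda>k. F2 (m - k) * U (m - (m - k))) summable_on UNIV"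
      using Y2(1)[of m] refl_summable[of "\<lambda>k. F2 k * U (m - k)" m] by simp
    thus ?thesis by (simp add: mult.commute)
  qed
  have eY: "(\<Sum>\<^sub>\<infinity>k. U k * F2 (m - k)) = Y m" for m
  proof -
    have "(\<Sum>\<^sub>\<infinity>k. F2 (m - k) * U (m - (m - k))) = Y m"
      unfolding Y_def by (rule refl_infsum)
    thus ?thesis by (simp add: mult.commute)
  qed
  have coef: "wt s m * (cmod (fprod u v m))^2 \<le> 2 * (2 powr s)^2 * ((X m)^2 + (Y m)^2)" for m
  proof -
    have "cmod (fprod u v m) \<le> (\<Sum>\<^sub>\<infinity>k. U k * V (m - k))"
      unfolding fprod_def U_def V_def
      by (rule order_trans[OF norm_infsum_bound]) (use absm[of m] in \<open>simp_all add: U_def V_def norm_mult\<close>)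
    hence "p m * cmod (fprod u v m) \<le> p m * (\<Sum>\<^sub>\<infinity>k. U k * V (m - k))"
      using p1[of m] by (simp add: mult_left_mono)
    also have "\<dots> = (\<Sum>\<^sub>\<infinity>k. p m * (U k * V (m - k)))" by (simp add: infsum_cmult_right')
    also have "\<dots> \<le> (\<Sum>\<^sub>\<infinity>k. 2 powr s * (F1 k * V (m - k) + U k * F2 (m - k)))"
    proof (rule infsum_mono)
      show "(\<lambda>k. p m * (U k * V (m - k))) summable_on UNIV" by (rule summable_on_cmult_right[OF absm])
      show "(\<lambda>k. 2 powr s * (F1 k * V (m - k) + U k * F2 (m - k))) summable_on UNIV"
        by (rule summable_on_cmult_right[OF summable_on_add[OF Y1(1) sY']])
      fix k
      have "p m \<le> 2 powr s * (p k + p (m - k))" unfolding p_def using s by (intro wt_tri) simp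
      hence "p m * (U k * V (m - k)) \<le> 2 powr s * (p k + p (m - k)) * (U k * V (m - k))"
        using U0 V0 by (simp add: mult_right_mono)
      thus "p m * (U k * V (m - k)) \<le> 2 powr s * (F1 k * V (m - k) + U k * F2 (m - k))"
        unfolding F1_def F2_def by (simp add: algebra_simps)
    qed
    also have "\<dots> = 2 powr s * (X m + Y m)"
      unfolding X_def eY[symmetric] by (simp add: infsum_cmult_right' infsum_add[OF Y1(1) sY'])
    finally have le: "p m * cmod (fprod u v m) \<le> 2 powr s * (X m + Y m)" .
    have nn: "0 \<le> p m * cmod (fprod u v m)" using p1[of m] by simp
    have "wt s m * (cmod (fprod u v m))^2 = (p m * cmod (fprod u v m))^2"
      by (simp add: power_mult_distrib p2)
    also have "\<dots> \<le> (2 powr s * (X m + Y m))^2"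
      using le nn by (rule power_mono)
    also have "\<dots> = (2 powr s)^2 * (X m + Y m)^2" by (simp add: power_mult_distrib)
    also have "\<dots> \<le> (2 powr s)^2 * (2 * ((X m)^2 + (Y m)^2))"
    proof (rule mult_left_mono)
      have "0 \<le> (X m - Y m)^2" by simp
      thus "(X m + Y m)^2 \<le> 2 * ((X m)^2 + (Y m)^2)" by (simp add: power2_eq_square algebra_simps)
    qed simp
    also have "\<dots> = 2 * (2 powr s)^2 * ((X m)^2 + (Y m)^2)" by simp
    finally show ?thesis .
  qed
  have sXY: "(\<lambda>m. 2 * (2 powr s)^2 * ((X m)^2 + (Y m)^2)) summable_on UNIV"
    by (rule summable_on_cmult_right[OF summable_on_add[OF sX sY]])
  show inh: "in_Hs s (fprod u v)" unfolding in_Hs_wt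
    by (rule summable_on_comparison_test[OF sXY coef]) simp
  have "(Hs_norm s (fprod u v))^2 \<le> (\<Sum>\<^sub>\<infinity>m. 2 * (2 powr s)^2 * ((X m)^2 + (Y m)^2))"
    unfolding Hs_norm_sq by (rule infsum_mono[OF _ sXY coef]) (use inh in \<open>simp add: in_Hs_wt\<close>)
  also have "\<dots> = 2 * (2 powr s)^2 * ((\<Sum>\<^sub>\<infinity>m. (X m)^2) + (\<Sum>\<^sub>\<infinity>m. (Y m)^2))"
    by (simp add: infsum_cmult_right' infsum_add[OF sX sY])
  also have "\<dots> \<le> 2 * (2 powr s)^2 * (2 * (S * Nu * Nv))"
  proof (rule mult_left_mono)
    show "(\<Sum>\<^sub>\<infinity>m. (X m)^2) + (\<Sum>\<^sub>\<infinity>m. (Y m)^2) \<le> 2 * (S * Nu * Nv)" using iX iY by linarith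
  qed simp
  also have "\<dots> = (algC s * Hs_norm s u * Hs_norm s v)^2"
    unfolding algC_def Nu_def Nv_def using arith_aux[OF S0] unfolding S_def .
  finally show "Hs_norm s (fprod u v) \<le> algC s * Hs_norm s u * Hs_norm s v"
    by (rule power2_le_imp_le) (simp add: algC_nonneg)
qed



lemma cmod_H1[simp]: "cmod (H1 t w n) = cmod (w n)"
  unfolding H1_def by (simp add: norm_mult norm_exp_eq_Re)

lemma in_Hs_H1[simp]: "in_Hs s (H1 t w) \<longleftrightarrow> in_Hs s w"
  unfolding in_Hs_wt by simp

lemma Hs_norm_H1[simp]: "Hs_norm s (H1 t w) = Hs_norm s w"
  unfolding Hs_norm_wt by simp

lemma H1_lin: "H1 t (\<lambda>n. c * a n + b n) = (\<lambda>n. c * H1 t a n + H1 t b n)"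
  unfolding H1_def by (simp add: algebra_simps)

lemma Dx_bound: "wt (s - 1) n * (cmod (Dx f n))^2 \<le> 1 * (wt s n * (cmod (f n))^2)"
proof -
  have w1: "wt 1 n = (real_of_int n)^2 + 1" unfolding wt_def by simp
  have "wt (s - 1) n * (cmod (Dx f n))^2 = wt (s - 1) n * (real_of_int n)^2 * (cmod (f n))^2"
    unfolding Dx_def by (simp add: norm_mult power_mult_distrib)
  also have "\<dots> \<le> wt (s - 1) n * wt 1 n * (cmod (f n))^2"
    unfolding w1 by (intro mult_right_mono mult_left_mono) auto
  also have "\<dots> = wt s n * (cmod (f n))^2" using wt_add[of "s-1" n 1] by simp
  finally show ?thesis by simp
qed

lemma q_facts:
  "\<bar>real_of_int m\<bar> \<le> wt (1/4) m * wt (1/4) m"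
  "wt (1/4) (n - k) \<le> 2 powr (1/4) * wt (1/4) n * wt (1/4) k"
proof -
  have "wt (1/4) m * wt (1/4) m = wt (1/2) m" using wt_add[of "1/4" m "1/4"] by simp
  also have "\<dots> = sqrt ((real_of_int m)^2 + 1)" unfolding wt_def by (simp add: powr_half_sqrt)
  also have "\<bar>real_of_int m\<bar> \<le> sqrt ((real_of_int m)^2 + 1)"
  proof -
    have "sqrt ((real_of_int m)^2) \<le> sqrt ((real_of_int m)^2 + 1)" by (rule real_sqrt_le_mono) simp
    thus ?thesis by simp
  qed
  finally show "\<bar>real_of_int m\<bar> \<le> wt (1/4) m * wt (1/4) m" by simp
  have le: "(real_of_int (n - k))^2 + 1 \<le> 2 * (((real_of_int n)^2 + 1) * ((real_of_int k)^2 + 1))"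
  proof -
    have "0 \<le> (real_of_int n + real_of_int k)^2" by simp
    moreover have "0 \<le> (real_of_int n * real_of_int k)^2" by simp
    ultimately show ?thesis by (simp add: power2_eq_square algebra_simps)
  qed
  have "wt (1/4) (n - k) \<le> (2 * (((real_of_int n)^2 + 1) * ((real_of_int k)^2 + 1))) powr (1/4)"
    unfolding wt_def by (rule powr_mono2) (use le in auto)
  also have "\<dots> = 2 powr (1/4) * wt (1/4) n * wt (1/4) k"
    unfolding wt_def by (simp add: powr_mult)
  finally show "wt (1/4) (n - k) \<le> 2 powr (1/4) * wt (1/4) n * wt (1/4) k" .
qed

lemma Dx_conv_summable:
  assumes s: "s > 1/2" and u: "in_Hs s u" and v: "in_Hs s v"
  shows "(\<lambda>k. norm (u k * Dx v (n - k))) summable_on UNIV"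
proof -
  define q where "q = wt (1/4)"
  define a where "a k = q k * cmod (u k)" for k
  define b where "b k = q k * cmod (v k)" for k
  have q0: "q k \<ge> 0" for k unfolding q_def by simp
  have qq: "q k * q k = wt (1/2) k" for k unfolding q_def using wt_add[of "1/4" k "1/4"] by simp
  have u2: "in_Hs (1/2) u" using in_Hs_mono[of "1/2" s u] s u by simp
  have v2: "in_Hs (1/2) v" using in_Hs_mono[of "1/2" s v] s v by simp
  have asq: "(a k)^2 = wt (1/2) k * (cmod (u k))^2" for k
    unfolding a_def qq[symmetric] by (simp add: power2_eq_square algebra_simps)
  have bsq: "(b k)^2 = wt (1/2) k * (cmod (v k))^2" for k
    unfolding b_def qq[symmetric] by (simp add: power2_eq_square algebra_simps)
  have sa: "(\<lambda>k. (a k)^2) summable_on UNIV"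
    using u2 unfolding in_Hs_wt by (simp add: asq)
  have sb: "(\<lambda>k. (b k)^2) summable_on UNIV"
    using v2 unfolding in_Hs_wt by (simp add: bsq)
  have sab: "(\<lambda>k. a k * b (n - k)) summable_on UNIV"
    by (rule l2_conv[OF _ _ sa sb]) (simp_all add: a_def b_def q0)
  show ?thesis
  proof (rule summable_on_comparison_test[OF summable_on_cmult_right[OF sab, of "2 powr (1/4) * q n"]])
    fix k
    have "norm (u k * Dx v (n - k)) = cmod (u k) * \<bar>real_of_int (n - k)\<bar> * cmod (v (n - k))"
      unfolding Dx_def by (simp add: norm_mult del: of_int_diff)
    also have "\<dots> \<le> cmod (u k) * (q (n - k) * q (n - k)) * cmod (v (n - k))"
      using q_facts(1)[of "n - k"] unfolding q_def
      by (intro mult_right_mono mult_left_mono) auto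
    also have "\<dots> \<le> cmod (u k) * ((2 powr (1/4) * q n * q k) * q (n - k)) * cmod (v (n - k))"
      using q_facts(2)[of n k] q0 unfolding q_def
      by (intro mult_right_mono mult_left_mono) auto
    also have "\<dots> = 2 powr (1/4) * q n * (a k * b (n - k))"
      unfolding a_def b_def by (simp add: algebra_simps)
    finally show "norm (u k * Dx v (n - k)) \<le> 2 powr (1/4) * q n * (a k * b (n - k))" .
  qed simp
qed

definition P :: "real \<Rightarrow> (int \<Rightarrow> complex) \<Rightarrow> (int \<Rightarrow> complex) \<Rightarrow> (int \<Rightarrow> complex)" where
  "P t u v = H1 (- t) (Dx (fprod (H1 t u) (H1 t v)))"

lemma P_bound:
  assumes s: "s > 1/2" and u: "in_Hs s u" and v: "in_Hs s v"
  shows "in_Hs (s - 1) (P t u v)" "Hs_norm (s - 1) (P t u v) \<le> algC s * Hs_norm s u * Hs_norm s v"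
proof -
  have f: "in_Hs s (fprod (H1 t u) (H1 t v))"
    and fn: "Hs_norm s (fprod (H1 t u) (H1 t v)) \<le> algC s * Hs_norm s u * Hs_norm s v"
    using alg[of s "H1 t u" "H1 t v"] s u v by auto
  have c: "wt (s - 1) n * (cmod (P t u v n))^2 \<le> 1 * (wt s n * (cmod (fprod (H1 t u) (H1 t v) n))^2)" for n
    unfolding P_def using Dx_bound[of s n] by simp
  show "in_Hs (s - 1) (P t u v)" using Hs_compare(1)[OF f _ c] by simp
  show "Hs_norm (s - 1) (P t u v) \<le> algC s * Hs_norm s u * Hs_norm s v"
    using Hs_compare(2)[OF f _ c] fn by simp
qed

lemma fprod_sym: "fprod u v = fprod v u"
proof
  fix n
  have "fprod u v n = (\<Sum>\<^sub>\<infinity>k. u (n - k) * v (n - (n - k)))"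
    unfolding fprod_def by (rule refl_infsum[symmetric])
  thus "fprod u v n = fprod v u n" unfolding fprod_def by (simp add: mult.commute)
qed

lemma P_sym: "P t u v = P t v u"
  unfolding P_def by (simp add: fprod_sym)

lemma conv_summable:
  assumes s: "s > 1/2" and u: "in_Hs s u" and v: "in_Hs s v"
  shows "(\<lambda>k. u k * v (n - k)) summable_on UNIV"
  using alg(1)[OF s u v] by (rule abs_summable_summable)

lemma fprod_lin:
  assumes s: "s > 1/2" and u: "in_Hs s u" and a: "in_Hs s a" and b: "in_Hs s b"
  shows "fprod u (\<lambda>n. c * a n + b n) = (\<lambda>n. c * fprod u a n + fprod u b n)"
proof
  fix n
  have "fprod u (\<lambda>n. c * a n + b n) n = (\<Sum>\<^sub>\<infinity>k. c * (u k * a (n - k)) + u k * b (n - k))"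
    unfolding fprod_def by (simp add: algebra_simps)
  also have "\<dots> = c * fprod u a n + fprod u b n"
    unfolding fprod_def
    by (subst infsum_add) (use conv_summable[OF s u a] conv_summable[OF s u b] in
        \<open>auto intro: summable_on_cmult_right simp: infsum_cmult_right'\<close>)
  finally show "fprod u (\<lambda>n. c * a n + b n) n = c * fprod u a n + fprod u b n" .
qed

lemma P_lin2:
  assumes s: "s > 1/2" and u: "in_Hs s u" and a: "in_Hs s a" and b: "in_Hs s b"
  shows "P t u (\<lambda>n. c * a n + b n) = (\<lambda>n. c * P t u a n + P t u b n)"
proof -
  have "fprod (H1 t u) (H1 t (\<lambda>n. c * a n + b n)) = (\<lambda>n. c * fprod (H1 t u) (H1 t a) n + fprod (H1 t u) (H1 t b) n)"
    unfolding H1_lin by (rule fprod_lin) (use s u a b in simp_all)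
  thus ?thesis unfolding P_def by (simp add: H1_def Dx_def algebra_simps)
qed

lemma P_lin1:
  assumes s: "s > 1/2" and u: "in_Hs s u" and a: "in_Hs s a" and b: "in_Hs s b"
  shows "P t (\<lambda>n. c * a n + b n) u = (\<lambda>n. c * P t a u n + P t b u n)"
  using P_lin2[OF assms] by (simp add: P_sym)

lemma Htilde_P:
  assumes s: "s > 1/2" and w: "in_Hs s w"
  shows "Htilde t w = (\<lambda>n. P t w w n / 2)"
proof
  fix n
  define U where "U = H1 t w"
  have U: "in_Hs s U" unfolding U_def using w by simp
  have s1: "(\<lambda>k. U k * Dx U (n - k)) summable_on UNIV"
    using Dx_conv_summable[OF s U U] by (rule abs_summable_summable)
  have s2: "(\<lambda>k. U (n - k) * Dx U (n - (n - k))) summable_on UNIV"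
    using s1 refl_summable[of "\<lambda>k. U k * Dx U (n - k)" n] by simp
  have e2: "(\<Sum>\<^sub>\<infinity>k. U (n - k) * Dx U (n - (n - k))) = fprod U (Dx U) n"
    unfolding fprod_def by (rule refl_infsum)
  have "2 * fprod U (Dx U) n = (\<Sum>\<^sub>\<infinity>k. U k * Dx U (n - k) + U (n - k) * Dx U (n - (n - k)))"
    using e2 infsum_add[OF s1 s2] unfolding fprod_def by simp
  also have "\<dots> = (\<Sum>\<^sub>\<infinity>k. \<i> * of_int n * (U k * U (n - k)))"
    by (rule infsum_cong) (simp add: Dx_def algebra_simps)
  also have "\<dots> = Dx (fprod U U) n" unfolding Dx_def fprod_def by (simp add: infsum_cmult_right')
  finally have "fprod U (Dx U) n * 2 = Dx (fprod U U) n" by (simp add: mult.commute)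
  hence "fprod U (Dx U) n = Dx (fprod U U) n / 2" by (simp add: field_simps)
  thus "Htilde t w n = P t w w n / 2"
    unfolding Htilde_def P_def U_def by (simp add: H1_def)
qed



lemma exp_2pi_int: "exp (\<i> * of_int m * of_real (2 * pi)) = 1"
proof -
  have eq: "\<i> * of_int m * of_real (2 * pi) = \<i> * (of_int m * (of_real pi * 2))" by (simp add: algebra_simps)
  show ?thesis unfolding eq by (rule exp_2pi_1_int)
qed

lemma H1_period: "H1 (t + 2 * pi) = H1 t"
proof (rule ext)+
  fix w n
  have "exp (- \<i> * of_int (n ^ 3) * of_real (t + 2 * pi)) =
        exp (- \<i> * of_int (n ^ 3) * of_real t) * exp (\<i> * of_int (- (n ^ 3)) * of_real (2 * pi))"
    by (simp add: exp_add[symmetric] algebra_simps)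
  thus "H1 (t + 2 * pi) w n = H1 t w n" unfolding H1_def by (simp only: exp_2pi_int) simp
qed

lemma Htilde_period: "Htilde (t + 2 * pi) w = Htilde t w"
proof -
  have "H1 (- (t + 2 * pi)) = H1 (- t)"
    using H1_period[of "- t - 2 * pi"] by simp
  thus ?thesis unfolding Htilde_def by (simp add: H1_period)
qed

lemma exp_int_integral:
  "((\<lambda>t. exp (\<i> * of_int m * of_real t)) has_integral (if m = 0 then complex_of_real (2 * pi) else 0)) {0..2 * pi}"
proof (cases "m = 0")
  case True
  have "((\<lambda>t. 1::complex) has_integral ((2*pi) *\<^sub>R 1)) {0..2*pi}"
    using has_integral_const_real[of "1::complex" 0 "2*pi"] by (simp add: content_real)
  thus ?thesis using True by (simp add: scaleR_conv_of_real)
next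
  case False
  define a where "a = \<i> * of_int m"
  have a: "a \<noteq> 0" unfolding a_def using False by simp
  have "\<And>t. t \<in> {0..2*pi} \<Longrightarrow> ((\<lambda>x. exp (a * of_real x) / a) has_vector_derivative exp (a * of_real t)) (at t within {0..2*pi})"
    using a
    by (intro derivative_eq_intros has_complex_derivative_imp_has_vector_derivative [unfolded o_def] | simp)+
  hence "((\<lambda>t. exp (a * of_real t)) has_integral (exp (a * of_real (2*pi)) / a - exp (a * of_real 0) / a)) {0..2*pi}"
    by (intro fundamental_theorem_of_calculus) auto
  moreover have "exp (a * of_real (2*pi)) = 1" unfolding a_def by (rule exp_2pi_int)
  ultimately show ?thesis using False unfolding a_def by simp
qed

lemma int_id: "(n::int)^3 - k^3 - (n - k)^3 = 3 * n * k * (n - k)"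
  by (simp add: power3_eq_cube algebra_simps)

lemma Htilde_expand:
  "Htilde t w n = (\<Sum>\<^sub>\<infinity>k. \<i> * of_int (n - k) * w k * w (n - k) * exp (\<i> * of_int (3 * n * k * (n - k)) * of_real t))"
proof -
  have e: "exp (- \<i> * of_int (n ^ 3) * of_real (- t)) * (exp (- \<i> * of_int (k ^ 3) * of_real t) * w k *
      (\<i> * of_int (n - k) * (exp (- \<i> * of_int ((n - k) ^ 3) * of_real t) * w (n - k))))
     = \<i> * of_int (n - k) * w k * w (n - k) * exp (\<i> * of_int (3 * n * k * (n - k)) * of_real t)" for k
  proof -
    have oi: "(of_int (n^3) :: complex) - of_int (k^3) - of_int ((n-k)^3) = of_int (3 * n * k * (n - k))"
      by (metis int_id of_int_diff)
    have "- \<i> * of_int (n ^ 3) * of_real (- t) + (- \<i> * of_int (k ^ 3) * of_real t) + (- \<i> * of_int ((n - k) ^ 3) * of_real t)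
        = \<i> * (of_int (n^3) - of_int (k^3) - of_int ((n-k)^3)) * (of_real t :: complex)"
      by (simp add: algebra_simps)
    also have "\<dots> = \<i> * of_int (3 * n * k * (n - k)) * of_real t" by (simp only: oi)
    finally have ex: "exp (- \<i> * of_int (n ^ 3) * of_real (- t)) * exp (- \<i> * of_int (k ^ 3) * of_real t) *
        exp (- \<i> * of_int ((n - k) ^ 3) * of_real t) = exp (\<i> * of_int (3 * n * k * (n - k)) * of_real t)"
      by (simp only: exp_add[symmetric])
    show ?thesis by (simp only: ex[symmetric]) (simp add: algebra_simps)
  qed
  show ?thesis
    unfolding Htilde_def H1_def fprod_def Dx_def
    by (simp only: infsum_cmult_right'[symmetric] e)
qed



lemma average:
  assumes s: "s > 1/2" and w: "in_Hs s w"
  shows "(\<lambda>t. Htilde t w n) integrable_on {0..2 * pi}"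
    and "integral {0..2 * pi} (\<lambda>t. Htilde t w n) / complex_of_real (2 * pi) = Kavg w n"
proof -
  define f where "f k t = \<i> * of_int (n - k) * w k * w (n - k) * exp (\<i> * of_int (3 * n * k * (n - k)) * of_real t)" for k t
  define M where "M k = norm (w k * Dx w (n - k))" for k
  define c where "c k = \<i> * of_int (n - k) * w k * w (n - k) * (if 3 * n * k * (n - k) = 0 then complex_of_real (2 * pi) else 0)" for k
  have sM: "M summable_on UNIV" unfolding M_def by (rule Dx_conv_summable[OF s w w])
  have nf: "norm (f k t) \<le> M k" for k t
    unfolding f_def M_def Dx_def by (simp add: norm_mult norm_exp_eq_Re del: of_int_diff)
  have hs: "((\<lambda>k. f k t) has_sum Htilde t w n) UNIV" for t
  proof -
    have "(\<lambda>k. norm (f k t)) summable_on UNIV"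
      by (rule summable_on_comparison_test[OF sM nf]) simp
    hence "(\<lambda>k. f k t) summable_on UNIV" by (rule abs_summable_summable)
    moreover have "Htilde t w n = (\<Sum>\<^sub>\<infinity>k. f k t)" unfolding f_def by (rule Htilde_expand)
    ultimately show ?thesis by (simp add: has_sum_iff)
  qed
  have ul: "uniform_limit {0..2*pi} (\<lambda>X t. \<Sum>k\<in>X. f k t) (\<lambda>t. Htilde t w n) (finite_subsets_at_top UNIV)"
    by (rule Weierstrass_m_test_general'[OF _ hs sM]) (rule nf)
  have cont: "continuous_on {0..2*pi} (\<lambda>t. \<Sum>k\<in>X. f k t)" for X
    unfolding f_def
    by (intro continuous_on_sum continuous_on_mult continuous_on_const continuous_on_exp continuous_on_of_real continuous_on_id)
  obtain I J where I: "\<And>X. ((\<lambda>t. \<Sum>k\<in>X. f k t) has_integral I X) {0..2*pi}"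
    and J: "((\<lambda>t. Htilde t w n) has_integral J) {0..2*pi}"
    and lim: "(I \<longlongrightarrow> J) (finite_subsets_at_top UNIV)"
    by (rule uniform_limit_integral[OF ul cont finite_subsets_at_top_neq_bot]) blast
  have fk: "(f k has_integral c k) {0..2*pi}" for k
    unfolding f_def c_def using has_integral_mult_right[OF exp_int_integral[of "3 * n * k * (n - k)"]]
    by simp
  have IX: "I X = sum c X" if "finite X" for X
    using has_integral_sum[OF that fk] I[of X] by (rule has_integral_unique[rotated])
  have "(sum c \<longlongrightarrow> J) (finite_subsets_at_top UNIV)"
  proof (rule Lim_transform_eventually[OF lim])
    show "\<forall>\<^sub>F X in finite_subsets_at_top UNIV. I X = sum c X"
      by (rule eventually_finite_subsets_at_top_weakI) (use IX in auto)
  qed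
  hence cJ: "(c has_sum J) UNIV" by (simp add: has_sum_def)
  show "(\<lambda>t. Htilde t w n) integrable_on {0..2 * pi}" using J by blast
  have intJ: "integral {0..2 * pi} (\<lambda>t. Htilde t w n) = J" using J by (rule integral_unique)
  show "integral {0..2 * pi} (\<lambda>t. Htilde t w n) / complex_of_real (2 * pi) = Kavg w n"
  proof (cases "n = 0")
    case False
    have "(c has_sum c 0) UNIV"
    proof (rule has_sum_finite_neutralI[of "{0}"])
      fix k :: int assume "k \<in> UNIV - {0}"
      hence k: "k \<noteq> 0" by simp
      show "c k = 0"
      proof (cases "k = n")
        case True thus ?thesis unfolding c_def by simp
      next
        case False
        hence "3 * n * k * (n - k) \<noteq> 0" using k \<open>n \<noteq> 0\<close> by simp
        thus ?thesis unfolding c_def by simp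
      qed
    qed auto
    hence "J = c 0" using cJ has_sum_unique by blast
    thus ?thesis using intJ False unfolding c_def Kavg_def by simp
  next
    case True
    have c0: "c k = complex_of_real (2 * pi) * (\<i> * of_int (- k) * w k * w (- k))" for k
      unfolding c_def True by simp
    have "J = infsum c UNIV" using cJ by (simp add: has_sum_iff)
    also have "\<dots> = complex_of_real (2 * pi) * (\<Sum>\<^sub>\<infinity>k. \<i> * of_int (- k) * w k * w (- k))"
      unfolding c0 by (rule infsum_cmult_right')
    also have "(\<Sum>\<^sub>\<infinity>k. \<i> * of_int (- k) * w k * w (- k)) = (\<Sum>\<^sub>\<infinity>m. \<i> * of_int m * w m * w (- m))"
    proof -
      have "(\<Sum>\<^sub>\<infinity>k. \<i> * of_int (- k) * w k * w (- k)) = (\<Sum>\<^sub>\<infinity>k. \<i> * of_int (- k) * w (- (- k)) * w (- k))"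
        by simp
      also have "\<dots> = (\<Sum>\<^sub>\<infinity>m. \<i> * of_int m * w (- m) * w m)"
        by (rule infsum_reindex_bij_betw[OF bij_neg, of "\<lambda>m. \<i> * of_int m * w (- m) * w m"])
      finally show ?thesis by (simp add: algebra_simps)
    qed
    finally show ?thesis using intJ True unfolding Kavg_def by simp
  qed
qed



lemma half_bound:
  assumes "in_Hs t v"
  shows "in_Hs t (\<lambda>n. v n / 2)" "Hs_norm t (\<lambda>n. v n / 2) \<le> 1/2 * Hs_norm t v"
proof -
  have c: "wt t n * (cmod (v n / 2))^2 \<le> (1/4) * (wt t n * (cmod (v n))^2)" for n
    by (simp add: norm_divide power_divide)
  show "in_Hs t (\<lambda>n. v n / 2)" using Hs_compare(1)[OF assms _ c] by simp
  have sq: "sqrt (1/4::real) = 1/2" by (simp add: real_sqrt_divide)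
  have "Hs_norm t (\<lambda>n. v n / 2) \<le> sqrt (1/4) * Hs_norm t v" by (rule Hs_compare(2)[OF assms _ c]) simp
  thus "Hs_norm t (\<lambda>n. v n / 2) \<le> 1/2 * Hs_norm t v" by (simp only: sq)
qed

lemma Hs_norm_zero[simp]: "Hs_norm t (\<lambda>n. 0) = 0"
  unfolding Hs_norm_wt by simp

lemma in_Hs_zero[simp]: "in_Hs t (\<lambda>n. 0)"
  unfolding in_Hs_wt by simp

lemma Htilde_bound:
  assumes s: "s > 1/2" and w: "in_Hs s w"
  shows "in_Hs (s - 1) (Htilde t w)" "Hs_norm (s - 1) (Htilde t w) \<le> algC s / 2 * (Hs_norm s w)^2"
proof -
  note pb = P_bound[OF s w w, of t]
  show "in_Hs (s - 1) (Htilde t w)" unfolding Htilde_P[OF s w] by (rule half_bound(1)[OF pb(1)])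
  have "Hs_norm (s - 1) (Htilde t w) \<le> 1/2 * Hs_norm (s - 1) (P t w w)"
    unfolding Htilde_P[OF s w] by (rule half_bound(2)[OF pb(1)])
  also have "\<dots> \<le> 1/2 * (algC s * Hs_norm s w * Hs_norm s w)" using pb(2) by simp
  finally show "Hs_norm (s - 1) (Htilde t w) \<le> algC s / 2 * (Hs_norm s w)^2" by (simp add: power2_eq_square)
qed

lemma in_Hs_add: "in_Hs s a \<Longrightarrow> in_Hs s b \<Longrightarrow> in_Hs s (\<lambda>n. a n + b n)"
  using in_Hs_lin[of s a b 1] by simp

lemma P_add1:
  assumes "s > 1/2" "in_Hs s u" "in_Hs s a" "in_Hs s b"
  shows "P t (\<lambda>n. a n + b n) u = (\<lambda>n. P t a u n + P t b u n)"
  using P_lin1[OF assms, of t 1] by simp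

lemma P_add2:
  assumes "s > 1/2" "in_Hs s u" "in_Hs s a" "in_Hs s b"
  shows "P t u (\<lambda>n. a n + b n) = (\<lambda>n. P t u a n + P t u b n)"
  using P_lin2[OF assms, of t 1] by simp

definition Dfam :: "real \<Rightarrow> nat \<Rightarrow> (int \<Rightarrow> complex) \<Rightarrow> (int \<Rightarrow> complex) list \<Rightarrow> (int \<Rightarrow> complex)" where
  "Dfam t k w hs = (if k = 0 then Htilde t w else if k = 1 then P t w (hs ! 0)
      else if k = 2 then P t (hs ! 0) (hs ! 1) else (\<lambda>n. 0))"

lemma len1: "length hs = Suc 0 \<Longrightarrow> \<exists>h. hs = [h]"
  by (cases hs) auto

lemma len2: "length hs = 2 \<Longrightarrow> \<exists>h1 h2. hs = [h1, h2]"
  by (cases hs; cases "tl hs") auto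

lemma ml_Dfam:
  assumes s: "s > 1/2" and w: "in_Hs s w"
  shows "multilin_bdd s (s - 1) k (Dfam t k w)"
proof -
  consider "k = 0" | "k = 1" | "k = 2" | "k \<ge> 3" by linarith
  thus ?thesis
  proof cases
    case 1
    show ?thesis unfolding multilin_bdd_def
    proof (intro conjI allI impI)
      fix hs :: "(int \<Rightarrow> complex) list" assume "length hs = k \<and> (\<forall>h\<in>set hs. in_Hs s h)"
      thus "in_Hs (s - 1) (Dfam t k w hs)" using 1 Htilde_bound(1)[OF s w] by (simp add: Dfam_def)
    next
      fix i hs a b and c :: real
      assume i: "i < k" and as: "length hs = k \<and> (\<forall>h\<in>set hs. in_Hs s h) \<and> in_Hs s a \<and> in_Hs s b"
      show "Dfam t k w (hs[i := (\<lambda>n. of_real c * a n + b n)])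
           = (\<lambda>n. of_real c * Dfam t k w (hs[i := a]) n + Dfam t k w (hs[i := b]) n)"
        using 1 i by simp
    next
      show "\<exists>C. \<forall>hs. length hs = k \<and> (\<forall>h\<in>set hs. in_Hs s h) \<longrightarrow>
         Hs_norm (s - 1) (Dfam t k w hs) \<le> C * (\<Prod>h\<leftarrow>hs. Hs_norm s h)"
        by (rule exI[of _ "Hs_norm (s - 1) (Htilde t w)"]) (use 1 in \<open>simp add: Dfam_def\<close>)
    qed
  next
    case 2
    show ?thesis unfolding multilin_bdd_def
    proof (intro conjI allI impI)
      fix hs :: "(int \<Rightarrow> complex) list" assume a: "length hs = k \<and> (\<forall>h\<in>set hs. in_Hs s h)"
      then obtain h where h: "hs = [h]" using 2 len1 by auto
      show "in_Hs (s - 1) (Dfam t k w hs)" using 2 a P_bound(1)[OF s w, of h t] by (simp add: Dfam_def h)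
    next
      fix i hs a b and c :: real
      assume i: "i < k" and as: "length hs = k \<and> (\<forall>h\<in>set hs. in_Hs s h) \<and> in_Hs s a \<and> in_Hs s b"
      then obtain h where h: "hs = [h]" using 2 len1 by auto
      have i0: "i = 0" using i 2 by simp
      show "Dfam t k w (hs[i := (\<lambda>n. of_real c * a n + b n)])
           = (\<lambda>n. of_real c * Dfam t k w (hs[i := a]) n + Dfam t k w (hs[i := b]) n)"
        using 2 P_lin2[OF s w, of a b t "of_real c"] as by (simp add: Dfam_def h i0)
    next
      show "\<exists>C. \<forall>hs. length hs = k \<and> (\<forall>h\<in>set hs. in_Hs s h) \<longrightarrow>
         Hs_norm (s - 1) (Dfam t k w hs) \<le> C * (\<Prod>h\<leftarrow>hs. Hs_norm s h)"
      proof (rule exI[of _ "algC s * Hs_norm s w"], intro allI impI)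
        fix hs :: "(int \<Rightarrow> complex) list" assume a: "length hs = k \<and> (\<forall>h\<in>set hs. in_Hs s h)"
        then obtain h where h: "hs = [h]" using 2 len1 by auto
        show "Hs_norm (s - 1) (Dfam t k w hs) \<le> algC s * Hs_norm s w * (\<Prod>h\<leftarrow>hs. Hs_norm s h)"
          using 2 a P_bound(2)[OF s w, of h t] by (simp add: Dfam_def h)
      qed
    qed
  next
    case 3
    show ?thesis unfolding multilin_bdd_def
    proof (intro conjI allI impI)
      fix hs :: "(int \<Rightarrow> complex) list" assume a: "length hs = k \<and> (\<forall>h\<in>set hs. in_Hs s h)"
      then obtain h1 h2 where h: "hs = [h1, h2]" using 3 len2[of hs] by auto
      show "in_Hs (s - 1) (Dfam t k w hs)" using 3 a P_bound(1)[OF s, of h1 h2 t] by (simp add: Dfam_def h)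
    next
      fix i hs a b and c :: real
      assume i: "i < k" and as: "length hs = k \<and> (\<forall>h\<in>set hs. in_Hs s h) \<and> in_Hs s a \<and> in_Hs s b"
      then obtain h1 h2 where h: "hs = [h1, h2]" using 3 len2[of hs] by auto
      have i01: "i = 0 \<or> i = 1" using i 3 by auto
      thus "Dfam t k w (hs[i := (\<lambda>n. of_real c * a n + b n)])
           = (\<lambda>n. of_real c * Dfam t k w (hs[i := a]) n + Dfam t k w (hs[i := b]) n)"
      proof
        assume i0: "i = 0"
        show ?thesis using 3 P_lin1[OF s, of h2 a b t "of_real c"] as by (simp add: Dfam_def h i0)
      next
        assume i1: "i = 1"
        show ?thesis using 3 P_lin2[OF s, of h1 a b t "of_real c"] as by (simp add: Dfam_def h i1)
      qed
    next
      show "\<exists>C. \<forall>hs. length hs = k \<and> (\<forall>h\<in>set hs. in_Hs s h) \<longrightarrow>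
         Hs_norm (s - 1) (Dfam t k w hs) \<le> C * (\<Prod>h\<leftarrow>hs. Hs_norm s h)"
      proof (rule exI[of _ "algC s"], intro allI impI)
        fix hs :: "(int \<Rightarrow> complex) list" assume a: "length hs = k \<and> (\<forall>h\<in>set hs. in_Hs s h)"
        then obtain h1 h2 where h: "hs = [h1, h2]" using 3 len2[of hs] by auto
        show "Hs_norm (s - 1) (Dfam t k w hs) \<le> algC s * (\<Prod>h\<leftarrow>hs. Hs_norm s h)"
          using 3 a P_bound(2)[OF s, of h1 h2 t] by (simp add: Dfam_def h mult.assoc)
      qed
    qed
  next
    case 4
    hence D0: "Dfam t k w hs = (\<lambda>n. 0)" for hs by (simp add: Dfam_def)
    show ?thesis unfolding multilin_bdd_def D0
      by (intro conjI allI impI exI[of _ 0]) simp_all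
  qed
qed

lemma frechet_Dfam:
  assumes s: "s > 1/2" and w: "in_Hs s w" and e: "\<epsilon> > 0"
  shows "\<exists>\<delta>>0. \<forall>h. in_Hs s h \<and> Hs_norm s h < \<delta> \<longrightarrow>
            (\<forall>hs. length hs = k \<and> (\<forall>g\<in>set hs. in_Hs s g \<and> Hs_norm s g \<le> 1) \<longrightarrow>
               Hs_norm (s - 1) (\<lambda>n. Dfam t k (\<lambda>m. w m + h m) hs n - Dfam t k w hs n - Dfam t (Suc k) w (h # hs) n)
                 \<le> \<epsilon> * Hs_norm s h)"
proof -
  consider "k = 0" | "k = 1" | "k \<ge> 2" by linarith
  thus ?thesis
  proof cases
    case 1
    define A where "A = algC s"
    have A0: "A \<ge> 0" unfolding A_def by (rule algC_nonneg)
    show ?thesis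
    proof (rule exI[of _ "2 * \<epsilon> / (A + 1)"], intro conjI allI impI)
      show "0 < 2 * \<epsilon> / (A + 1)" using e A0 by simp
      fix h hs assume h: "in_Hs s h \<and> Hs_norm s h < 2 * \<epsilon> / (A + 1)"
        and hs: "length hs = k \<and> (\<forall>g\<in>set hs. in_Hs s g \<and> Hs_norm s g \<le> 1)"
      have hs0: "hs = []" using hs 1 by simp
      have hH: "in_Hs s h" using h by simp
      have wh: "in_Hs s (\<lambda>m. w m + h m)" by (rule in_Hs_add[OF w hH])
      have "P t (\<lambda>m. w m + h m) (\<lambda>m. w m + h m) = (\<lambda>n. P t w w n + P t w h n + (P t h w n + P t h h n))"
        using P_add1[OF s wh w hH, of t] P_add2[OF s w w hH, of t] P_add2[OF s hH w hH, of t] by simp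
      hence diff: "(\<lambda>n. Dfam t k (\<lambda>m. w m + h m) hs n - Dfam t k w hs n - Dfam t (Suc k) w (h # hs) n)
          = (\<lambda>n. P t h h n / 2)"
        unfolding Dfam_def using 1 Htilde_P[OF s wh, of t] Htilde_P[OF s w, of t] P_sym[of t h w]
        by (auto simp: field_simps)
      define x where "x = Hs_norm s h"
      have x0: "x \<ge> 0" unfolding x_def by simp
      have "Hs_norm (s - 1) (\<lambda>n. P t h h n / 2) \<le> 1/2 * Hs_norm (s - 1) (P t h h)"
        by (rule half_bound(2)[OF P_bound(1)[OF s hH hH]])
      also have "\<dots> \<le> 1/2 * (A * x * x)" using P_bound(2)[OF s hH hH, of t] unfolding A_def x_def by simp
      also have "\<dots> \<le> \<epsilon> * x"
      proof -
        have "x < 2 * \<epsilon> / (A + 1)" using h unfolding x_def by simp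
        hence "x * (A + 1) < 2 * \<epsilon>" using A0 by (simp add: field_simps)
        hence "A * x \<le> 2 * \<epsilon>" using x0 by (simp add: algebra_simps)
        hence "A * x * x \<le> 2 * \<epsilon> * x" using x0 by (rule mult_right_mono)
        thus ?thesis by simp
      qed
      finally show "Hs_norm (s - 1) (\<lambda>n. Dfam t k (\<lambda>m. w m + h m) hs n - Dfam t k w hs n - Dfam t (Suc k) w (h # hs) n)
                 \<le> \<epsilon> * Hs_norm s h" unfolding diff x_def .
    qed
  next
    case 2
    show ?thesis
    proof (rule exI[of _ 1], intro conjI allI impI)
      fix h hs assume h: "in_Hs s h \<and> Hs_norm s h < 1"
        and hs: "length hs = k \<and> (\<forall>g\<in>set hs. in_Hs s g \<and> Hs_norm s g \<le> 1)"
      then obtain g where g: "hs = [g]" using 2 len1 by auto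
      have gH: "in_Hs s g" using hs g by simp
      have hH: "in_Hs s h" using h by simp
      have "(\<lambda>n. Dfam t k (\<lambda>m. w m + h m) hs n - Dfam t k w hs n - Dfam t (Suc k) w (h # hs) n) = (\<lambda>n. 0)"
        using P_add1[OF s gH w hH, of t] 2 by (simp add: Dfam_def g)
      thus "Hs_norm (s - 1) (\<lambda>n. Dfam t k (\<lambda>m. w m + h m) hs n - Dfam t k w hs n - Dfam t (Suc k) w (h # hs) n)
                 \<le> \<epsilon> * Hs_norm s h" using e by simp
    qed simp
  next
    case 3
    show ?thesis
    proof (rule exI[of _ 1], intro conjI allI impI)
      fix h hs
      have "(\<lambda>n. Dfam t k (\<lambda>m. w m + h m) hs n - Dfam t k w hs n - Dfam t (Suc k) w (h # hs) n) = (\<lambda>n. 0)"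
        using 3 by (simp add: Dfam_def)
      thus "Hs_norm (s - 1) (\<lambda>n. Dfam t k (\<lambda>m. w m + h m) hs n - Dfam t k w hs n - Dfam t (Suc k) w (h # hs) n)
                 \<le> \<epsilon> * Hs_norm s h" using e by simp
    qed simp
  qed
qed

lemma smooth_Htilde:
  assumes s: "s > 1/2"
  shows "smooth_Hs s (s - 1) (Htilde t)"
  unfolding smooth_Hs_def
proof (rule exI[of _ "Dfam t"], intro conjI allI impI)
  fix w assume "in_Hs s w" thus "Dfam t 0 w [] = Htilde t w" by (simp add: Dfam_def)
next
  fix k w assume "in_Hs s w" thus "multilin_bdd s (s - 1) k (Dfam t k w)" by (rule ml_Dfam[OF s])
next
  fix k w \<epsilon> assume "in_Hs s w" "(\<epsilon>::real) > 0"
  thus "\<exists>\<delta>>0. \<forall>h. in_Hs s h \<and> Hs_norm s h < \<delta> \<longrightarrow>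
            (\<forall>hs. length hs = k \<and> (\<forall>g\<in>set hs. in_Hs s g \<and> Hs_norm s g \<le> 1) \<longrightarrow>
               Hs_norm (s - 1) (\<lambda>n. Dfam t k (\<lambda>m. w m + h m) hs n - Dfam t k w hs n - Dfam t (Suc k) w (h # hs) n)
                 \<le> \<epsilon> * Hs_norm s h)"
    by (rule frechet_Dfam[OF s])
qed

theorem lemma2p7:
  fixes s :: real
  assumes "s > 1/2"
  shows "(\<forall>\<tau> w n. in_Hs s w \<longrightarrow>
            (\<lambda>k. norm (H1 \<tau> w k * Dx (H1 \<tau> w) (n - k))) summable_on UNIV)
       \<and> (\<forall>\<tau> w. in_Hs s w \<longrightarrow> in_Hs (s - 1) (Htilde \<tau> w))
       \<and> (\<forall>\<tau>. smooth_Hs s (s - 1) (Htilde \<tau>))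
       \<and> (\<exists>C. \<forall>\<tau> w. in_Hs s w \<longrightarrow> Hs_norm (s - 1) (Htilde \<tau> w) \<le> C * (Hs_norm s w)\<^sup>2)
       \<and> (\<forall>\<tau> w. Htilde (\<tau> + 2 * pi) w = Htilde \<tau> w)
       \<and> (\<forall>w. in_Hs s w \<longrightarrow>
            (\<lambda>m. norm (\<i> * of_int m * w m * w (- m))) summable_on UNIV \<and>
            (\<forall>n. (\<lambda>\<tau>. Htilde \<tau> w n) integrable_on {0..2 * pi} \<and>
                 integral {0..2 * pi} (\<lambda>\<tau>. Htilde \<tau> w n) / complex_of_real (2 * pi) = Kavg w n))"
proof (intro conjI allI impI)
  fix \<tau> w n assume w: "in_Hs s w"
  show "(\<lambda>k. norm (H1 \<tau> w k * Dx (H1 \<tau> w) (n - k))) summable_on UNIV"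
    by (rule Dx_conv_summable[OF assms]) (use w in simp_all)
next
  fix \<tau> w assume w: "in_Hs s w"
  show "in_Hs (s - 1) (Htilde \<tau> w)" by (rule Htilde_bound(1)[OF assms w])
next
  fix \<tau> show "smooth_Hs s (s - 1) (Htilde \<tau>)" by (rule smooth_Htilde[OF assms])
next
  show "\<exists>C. \<forall>\<tau> w. in_Hs s w \<longrightarrow> Hs_norm (s - 1) (Htilde \<tau> w) \<le> C * (Hs_norm s w)\<^sup>2"
    using Htilde_bound(2)[OF assms] by blast
next
  fix \<tau> w show "Htilde (\<tau> + 2 * pi) w = Htilde \<tau> w" by (rule Htilde_period)
next
  fix w assume w: "in_Hs s w"
  have "(\<lambda>k. norm (w k * Dx w (0 - k))) summable_on UNIV" by (rule Dx_conv_summable[OF assms w w])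
  moreover have "norm (w k * Dx w (0 - k)) = norm (\<i> * of_int k * w k * w (- k))" for k
    unfolding Dx_def by (simp add: norm_mult)
  ultimately show "(\<lambda>m. norm (\<i> * of_int m * w m * w (- m))) summable_on UNIV" by simp
next
  fix w n assume w: "in_Hs s w"
  show "(\<lambda>\<tau>. Htilde \<tau> w n) integrable_on {0..2 * pi}" by (rule average(1)[OF assms w])
  show "integral {0..2 * pi} (\<lambda>\<tau>. Htilde \<tau> w n) / complex_of_real (2 * pi) = Kavg w n"
    by (rule average(2)[OF assms w])
qed


end
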